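(* Consider the following game with $n$ players partitioned (unknown to the good players) into a set $G$ of $n-f$ good players and a set $B$ of $f=n/(3+\epsilon)$ bad players, for some small $\epsilon>0$, played for up to $T$ iterations. In iteration $t$: the adversary privately picks $\sigma(t)\in\{-1,1\}$; each good player $i\in G$ picks $X_i(t)\in\{-1,1\}$ uniformly at random, independently; the bad players see these values and then choose $X_i(t)\in\{-1,1\}$ for $i\in B$ arbitrarily; if $\mathrm{sgn}(\sum_{i\in[n]}X_i(t))=\sigma(t)$ the game continues to iteration $t+1$, otherwise it ends. Let $T=\tilde{\Theta}((n/\epsilon)^2)$. Then, with high probability, if the game does not end within $T$ iterations, the pair $(i,j)\in[n]^2$ with $i\neq j$ maximizing $\langle X_i,X_j\rangle=\sum_{t=1}^T X_i(t)X_j(t)$ satisfies $B\cap\{i,j\}\neq\emptyset$.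
   Context: $\mathrm{sgn}(x)=1$ if $x\ge 0$ and $-1$ if $x<0$. "With high probability" means with probability $1-n^{-\Omega(1)}$ (arbitrarily large polynomial). *)

theory Defs
  imports "HOL-Probability.Probability"
begin

definition sgnp :: "int \<Rightarrow> int" where
  "sgnp x = (if x \<ge> 0 then 1 else -1)"

text \<open>The bits of good players are their
  uniformly random choices; the bits at indices of bad players are unused by the
  game itself but may serve as private randomness of the adversary.\<close>
definition Omega :: "nat \<Rightarrow> nat \<Rightarrow> (nat \<Rightarrow> nat \<Rightarrow> int) set" where
  "Omega n T = {\<omega>. (\<forall>t i. t < T \<and> i < n \<longrightarrow> \<omega> t i \<in> {-1, 1}) \<and>
                    (\<forall>t i. \<not> (t < T \<and> i < n) \<longrightarrow> \<omega> t i = 0)}"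

text \<open>Admissible adversary: sig (the adversary's private target sign) at round t
  depends only on what happened before round t; the bad players' values at round t
  may additionally depend on the good players' values of round t.\<close>
definition admissible_adversary ::
  "nat \<Rightarrow> nat set \<Rightarrow> ((nat \<Rightarrow> nat \<Rightarrow> int) \<Rightarrow> nat \<Rightarrow> int)
     \<Rightarrow> ((nat \<Rightarrow> nat \<Rightarrow> int) \<Rightarrow> nat \<Rightarrow> nat \<Rightarrow> int) \<Rightarrow> bool" where
  "admissible_adversary n B sig badX \<longleftrightarrow>
     (\<forall>\<omega> t. sig \<omega> t \<in> {-1, 1}) \<and>
     (\<forall>\<omega> t i. badX \<omega> t i \<in> {-1, 1}) \<and>
     (\<forall>\<omega> \<omega>' t. (\<forall>s<t. \<forall>i. \<omega> s i = \<omega>' s i) \<longrightarrow> sig \<omega> t = sig \<omega>' t) \<and>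
     (\<forall>\<omega> \<omega>' t i. (\<forall>s<t. \<forall>k. \<omega> s k = \<omega>' s k) \<and>
                  (\<forall>k\<in>{..<n} - B. \<omega> t k = \<omega>' t k)
                  \<longrightarrow> badX \<omega> t i = badX \<omega>' t i)"

definition play ::
  "nat set \<Rightarrow> ((nat \<Rightarrow> nat \<Rightarrow> int) \<Rightarrow> nat \<Rightarrow> nat \<Rightarrow> int) \<Rightarrow> (nat \<Rightarrow> nat \<Rightarrow> int)
     \<Rightarrow> nat \<Rightarrow> nat \<Rightarrow> int" where
  "play B badX \<omega> t i = (if i \<in> B then badX \<omega> t i else \<omega> t i)"

definition survives ::
  "nat \<Rightarrow> nat \<Rightarrow> nat set \<Rightarrow> ((nat \<Rightarrow> nat \<Rightarrow> int) \<Rightarrow> nat \<Rightarrow> int)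
     \<Rightarrow> ((nat \<Rightarrow> nat \<Rightarrow> int) \<Rightarrow> nat \<Rightarrow> nat \<Rightarrow> int) \<Rightarrow> (nat \<Rightarrow> nat \<Rightarrow> int) \<Rightarrow> bool" where
  "survives n T B sig badX \<omega> \<longleftrightarrow>
     (\<forall>t<T. sgnp (\<Sum>i<n. play B badX \<omega> t i) = sig \<omega> t)"

definition ip ::
  "nat \<Rightarrow> nat set \<Rightarrow> ((nat \<Rightarrow> nat \<Rightarrow> int) \<Rightarrow> nat \<Rightarrow> nat \<Rightarrow> int) \<Rightarrow> (nat \<Rightarrow> nat \<Rightarrow> int)
     \<Rightarrow> nat \<Rightarrow> nat \<Rightarrow> int" where
  "ip T B badX \<omega> i j = (\<Sum>t<T. play B badX \<omega> t i * play B badX \<omega> t j)"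

end

theory Submission
  imports Defs
begin


definition Vs :: "nat \<Rightarrow> (nat \<Rightarrow> int) set" where
  "Vs n = PiE_dflt {..<n} 0 (\<lambda>_. {-1, 1})"

lemma Vs_finite: "finite (Vs n)" unfolding Vs_def by (intro finite_PiE_dflt) auto

lemma Vs_ne: "Vs n \<noteq> {}"
proof -
  have "(\<lambda>i. if i < n then 1 else 0) \<in> Vs n" by (auto simp: Vs_def PiE_dflt_def)
  thus ?thesis by auto
qed

lemma Omega_eq: "Omega n T = PiE_dflt {..<T} (\<lambda>_. 0) (\<lambda>_. Vs n)"
  unfolding Omega_def Vs_def PiE_dflt_def by (auto simp: fun_eq_iff)

lemma Omega_finite: "finite (Omega n T)"
  unfolding Omega_eq by (intro finite_PiE_dflt) (auto simp: Vs_finite)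

lemma Omega_ne: "Omega n T \<noteq> {}"
proof -
  obtain v where "v \<in> Vs n" using Vs_ne by auto
  hence "(\<lambda>t. if t < T then v else (\<lambda>_. 0)) \<in> Omega n T" by (auto simp: Omega_eq PiE_dflt_def)
  thus ?thesis by auto
qed

lemma Omega_pmf: "pmf_of_set (Omega n T) = Pi_pmf {..<T} (\<lambda>_. 0) (\<lambda>_. pmf_of_set (Vs n))"
  unfolding Omega_eq by (subst Pi_pmf_of_set) (auto simp: Vs_finite Vs_ne)

lemma hoeffding_gen:
  fixes h :: "'b \<Rightarrow> real" and D :: "'b pmf" and T :: nat
  assumes T: "T > 0" and ab: "a < b" and hab: "\<And>v. v \<in> set_pmf D \<Longrightarrow> h v \<in> {a..b}" and x: "x \<ge> 0"
  shows "measure_pmf.prob (Pi_pmf {..<T} d (\<lambda>_. D)) {\<omega>. (\<Sum>t<T. h (\<omega> t)) \<le> real T * measure_pmf.expectation D h - x}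
           \<le> exp (-2 * x\<^sup>2 / (real T * (b - a)\<^sup>2))"
   and "measure_pmf.prob (Pi_pmf {..<T} d (\<lambda>_. D)) {\<omega>. (\<Sum>t<T. h (\<omega> t)) \<ge> real T * measure_pmf.expectation D h + x}
           \<le> exp (-2 * x\<^sup>2 / (real T * (b - a)\<^sup>2))"
proof -
  define P where "P = Pi_pmf {..<T} d (\<lambda>_. D)"
  have comp: "map_pmf (\<lambda>f. f i) P = D" if "i < T" for i
    unfolding P_def using that by (subst Pi_pmf_component) (auto simp: finite_lessThan)
  have distr_eq: "distr (measure_pmf P) borel (\<lambda>f. h (f i)) = distr (measure_pmf D) borel h" if "i < T" for i
  proof -
    have "distr (measure_pmf P) borel (\<lambda>f. h (f i)) = distr (measure_pmf (map_pmf (\<lambda>f. f i) P)) borel h"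
      unfolding map_pmf_rep_eq by (subst distr_distr) (auto simp: o_def)
    thus ?thesis using comp[OF that] by simp
  qed
  have expY: "measure_pmf.expectation P (\<lambda>f. h (f 0)) = measure_pmf.expectation D h"
  proof -
    have "measure_pmf.expectation P (\<lambda>f. h (f 0)) = measure_pmf.expectation (map_pmf (\<lambda>f. f 0) P) h"
      by simp
    thus ?thesis using comp[of 0] T by simp
  qed
  interpret H: Hoeffding_ineq_iid "measure_pmf P" "{..<T}" "\<lambda>i f. h (f i)" "\<lambda>f. h (f 0)" a b
     "measure_pmf.expectation D h"
  proof unfold_locales
    show "prob_space.indep_vars (measure_pmf P) (\<lambda>_. borel) (\<lambda>i f. h (f i)) {..<T}"
      unfolding P_def
      by (intro prob_space.indep_vars_compose2[OF _ indep_vars_Pi_pmf])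
         (auto simp: measure_pmf.prob_space_axioms)
  next
    fix i assume "i \<in> {..<T}"
    thus "distr (measure_pmf P) borel (\<lambda>f. h (f i)) = distr (measure_pmf P) borel (\<lambda>f. h (f 0))"
      using distr_eq[of i] distr_eq[of 0] T by simp
  next
    show "AE x in measure_pmf P. h (x 0) \<in> {a..b}"
    proof (rule AE_pmfI)
      fix f assume "f \<in> set_pmf P"
      hence "f 0 \<in> set_pmf (map_pmf (\<lambda>f. f 0) P)" by auto
      thus "h (f 0) \<in> {a..b}" using comp[of 0] T hab by auto
    qed
  qed (auto simp: expY)
  have ne: "{..<T} \<noteq> {}" using T by auto
  show "measure_pmf.prob (Pi_pmf {..<T} d (\<lambda>_. D)) {\<omega>. (\<Sum>t<T. h (\<omega> t)) \<le> real T * measure_pmf.expectation D h - x}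
           \<le> exp (-2 * x\<^sup>2 / (real T * (b - a)\<^sup>2))"
    using H.Hoeffding_ineq_le[OF x ab ne] by (simp add: P_def)
  show "measure_pmf.prob (Pi_pmf {..<T} d (\<lambda>_. D)) {\<omega>. (\<Sum>t<T. h (\<omega> t)) \<ge> real T * measure_pmf.expectation D h + x}
           \<le> exp (-2 * x\<^sup>2 / (real T * (b - a)\<^sup>2))"
    using H.Hoeffding_ineq_ge[OF x ab ne] by (simp add: P_def)
qed



lemma sum_antisym:
  fixes f :: "'a \<Rightarrow> 'b::ring_1"
  assumes "bij_betw \<psi> A A" "\<And>v. v \<in> A \<Longrightarrow> f (\<psi> v) = - f v"
    and ch: "\<And>x::'b. x = - x \<Longrightarrow> x = 0"
  shows "sum f A = 0"
proof -
  have "sum f A = sum (f \<circ> \<psi>) A" using sum.reindex_bij_betw[OF assms(1), of f] by simp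
  also have "\<dots> = - sum f A" using assms(2) by (simp add: sum_negf)
  finally show ?thesis using ch by blast
qed

lemma ch_int: "(x::int) = - x \<Longrightarrow> x = 0" by simp

lemma flip_bij:
  assumes "i < n"
  shows "bij_betw (\<lambda>v. v(i := - v i)) (Vs n) (Vs n)"
proof (rule bij_betwI[where g="\<lambda>v. v(i := - v i)"])
  have "v(i := - v i) \<in> Vs n" if "v \<in> Vs n" for v
  proof -
    have "v i \<in> {-1, 1}" using that assms by (auto simp: Vs_def PiE_dflt_def)
    hence "- v i \<in> {-1, 1}" by auto
    thus ?thesis using that assms unfolding Vs_def PiE_dflt_def by auto
  qed
  thus "(\<lambda>v. v(i := - v i)) \<in> Vs n \<rightarrow> Vs n" "(\<lambda>v. v(i := - v i)) \<in> Vs n \<rightarrow> Vs n" by auto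
qed auto

lemma neg_bij: "bij_betw (\<lambda>v k. - v k) (Vs n) (Vs n)"
proof (rule bij_betwI[where g="\<lambda>v k. - v k"])
  show "(\<lambda>v k. - v k) \<in> Vs n \<rightarrow> Vs n" by (auto simp: Vs_def PiE_dflt_def)
  show "(\<lambda>v k. - v k) \<in> Vs n \<rightarrow> Vs n" by (auto simp: Vs_def PiE_dflt_def)
qed auto

lemma Vs_sq: "v \<in> Vs n \<Longrightarrow> i < n \<Longrightarrow> v i * v i = 1"
  by (auto simp: Vs_def PiE_dflt_def)

lemma Vs_abs: "v \<in> Vs n \<Longrightarrow> \<bar>v i\<bar> \<le> 1"
  by (cases "i < n") (auto simp: Vs_def PiE_dflt_def)

lemma sum_pair0:
  assumes "i < n" "j < n" "i \<noteq> j"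
  shows "(\<Sum>v\<in>Vs n. v i * v j) = 0"
  by (rule sum_antisym[OF flip_bij[OF assms(1)]]) (use assms in auto)

lemma sum_sq:
  assumes "gd \<subseteq> {..<n}"
  shows "(\<Sum>v\<in>Vs n. (\<Sum>i\<in>gd. v i)^2) = int (card gd) * int (card (Vs n))"
proof -
  have fin: "finite gd" using assms finite_subset by blast
  have "(\<Sum>v\<in>Vs n. (\<Sum>i\<in>gd. v i)^2) = (\<Sum>v\<in>Vs n. \<Sum>i\<in>gd. \<Sum>j\<in>gd. v i * v j)"
    by (simp add: power2_eq_square sum_product)
  also have "\<dots> = (\<Sum>i\<in>gd. \<Sum>j\<in>gd. \<Sum>v\<in>Vs n. v i * v j)"
  proof -
    have "(\<Sum>v\<in>Vs n. \<Sum>i\<in>gd. \<Sum>j\<in>gd. v i * v j) = (\<Sum>i\<in>gd. \<Sum>v\<in>Vs n. \<Sum>j\<in>gd. v i * v j)"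
      by (rule sum.swap)
    also have "\<dots> = (\<Sum>i\<in>gd. \<Sum>j\<in>gd. \<Sum>v\<in>Vs n. v i * v j)"
      by (intro sum.cong refl sum.swap)
    finally show ?thesis .
  qed
  also have "\<dots> = (\<Sum>i\<in>gd. \<Sum>j\<in>gd. if i = j then int (card (Vs n)) else 0)"
  proof (intro sum.cong refl)
    fix i j assume ij: "i \<in> gd" "j \<in> gd"
    show "(\<Sum>v\<in>Vs n. v i * v j) = (if i = j then int (card (Vs n)) else 0)"
    proof (cases "i = j")
      case True
      hence "(\<Sum>v\<in>Vs n. v i * v j) = (\<Sum>v\<in>Vs n. 1)"
        using ij assms by (intro sum.cong refl) (auto intro: Vs_sq)
      thus ?thesis using True by simp
    next
      case False thus ?thesis using sum_pair0[of i n j] ij assms by auto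
    qed
  qed
  also have "\<dots> = int (card gd) * int (card (Vs n))"
    using fin by (simp add: sum.delta)
  finally show ?thesis .
qed

lemma sgnp_neg: "sgnp (- x) * (- x)^2 = - (sgnp x * x^2)"
  by (cases "x = 0") (auto simp: sgnp_def)

lemma sum_sgn_sq:
  "(\<Sum>v\<in>Vs n. sgnp (\<Sum>i\<in>gd. v i) * (\<Sum>i\<in>gd. v i)^2) = 0"
proof (rule sum_antisym[OF neg_bij])
  fix v :: "nat \<Rightarrow> int"
  have "(\<Sum>i\<in>gd. - v i) = - (\<Sum>i\<in>gd. v i)" by (simp add: sum_negf)
  thus "sgnp (\<Sum>i\<in>gd. - v i) * (\<Sum>i\<in>gd. - v i)^2 = - (sgnp (\<Sum>i\<in>gd. v i) * (\<Sum>i\<in>gd. v i)^2)"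
    by (simp only: sgnp_neg)
qed simp

definition hW :: "nat set \<Rightarrow> (nat \<Rightarrow> int) \<Rightarrow> real" where
  "hW gd v = real_of_int ((\<Sum>i\<in>gd. v i)^2 - sgnp (\<Sum>i\<in>gd. v i) * (\<Sum>i\<in>gd. v i)^2)"

lemma exp_hW:
  assumes "gd \<subseteq> {..<n}"
  shows "measure_pmf.expectation (pmf_of_set (Vs n)) (hW gd) = real (card gd)"
proof -
  have "(\<Sum>v\<in>Vs n. hW gd v) = real_of_int (\<Sum>v\<in>Vs n. (\<Sum>i\<in>gd. v i)^2 - sgnp (\<Sum>i\<in>gd. v i) * (\<Sum>i\<in>gd. v i)^2)"
    unfolding hW_def by simp
  also have "\<dots> = real (card gd) * real (card (Vs n))"
    using sum_sq[OF assms] sum_sgn_sq[where n=n and gd=gd] by (simp add: sum_subtractf)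
  finally show ?thesis using Vs_finite Vs_ne
    by (subst integral_pmf_of_set) (auto simp: card_gt_0_iff)
qed

lemma exp_pair:
  assumes "i < n" "j < n" "i \<noteq> j"
  shows "measure_pmf.expectation (pmf_of_set (Vs n)) (\<lambda>v. real_of_int (v i * v j)) = 0"
proof -
  have "(\<Sum>v\<in>Vs n. real_of_int (v i * v j)) = real_of_int (\<Sum>v\<in>Vs n. v i * v j)" by simp
  thus ?thesis using sum_pair0[OF assms] Vs_finite Vs_ne
    by (subst integral_pmf_of_set) auto
qed

lemma GS_abs: "v \<in> Vs n \<Longrightarrow> finite gd \<Longrightarrow> \<bar>\<Sum>i\<in>gd. v i\<bar> \<le> int (card gd)"
proof -
  assume v: "v \<in> Vs n" and f: "finite gd"
  have "\<bar>\<Sum>i\<in>gd. v i\<bar> \<le> (\<Sum>i\<in>gd. \<bar>v i\<bar>)" by (rule sum_abs)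
  also have "\<dots> \<le> (\<Sum>i\<in>gd. 1)" by (intro sum_mono Vs_abs[OF v])
  finally show ?thesis by simp
qed

lemma hW_range:
  assumes "v \<in> Vs n" "finite gd"
  shows "hW gd v \<in> {0 .. 2 * real (card gd)^2}"
proof -
  define x where "x = (\<Sum>i\<in>gd. v i)"
  have ax: "\<bar>x\<bar> \<le> int (card gd)" using GS_abs[OF assms] x_def by simp
  have "x^2 \<le> (int (card gd))^2" using ax by (metis abs_le_square_iff abs_of_nat)
  hence "real_of_int (x^2) \<le> real (card gd)^2" by (metis of_int_le_iff of_int_of_nat_eq of_int_power)
  moreover have "hW gd v = real_of_int (x^2 - sgnp x * x^2)" by (simp add: hW_def x_def)
  ultimately show ?thesis by (auto simp: sgnp_def)
qed



definition phi :: "nat set \<Rightarrow> ((nat \<Rightarrow> nat \<Rightarrow> int) \<Rightarrow> nat \<Rightarrow> int) \<Rightarrow> (nat \<Rightarrow> nat \<Rightarrow> int) \<Rightarrow> nat \<Rightarrow> nat \<Rightarrow> int" where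
  "phi B sig \<omega> t i = (if i \<notin> B then sig \<omega> t * \<omega> t i else \<omega> t i)"

lemma phi_into:
  assumes adm: "admissible_adversary n B sig badX" and w: "\<omega> \<in> Omega n T"
  shows "phi B sig \<omega> \<in> Omega n T"
proof -
  have s: "sig \<omega> t \<in> {-1, 1}" for t using adm by (auto simp: admissible_adversary_def)
  have a: "\<omega> t i \<in> {-1, 1}" if "t < T" "i < n" for t i using w that by (auto simp: Omega_def)
  have b: "\<omega> t i = 0" if "\<not> (t < T \<and> i < n)" for t i using w that by (auto simp: Omega_def)
  have "phi B sig \<omega> t i \<in> {-1, 1}" if "t < T" "i < n" for t i
    using a[OF that] s[of t] unfolding phi_def by auto
  moreover have "phi B sig \<omega> t i = 0" if "\<not> (t < T \<and> i < n)" for t i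
    using b[OF that] unfolding phi_def by auto
  ultimately show ?thesis unfolding Omega_def by blast
qed

lemma phi_inj:
  assumes adm: "admissible_adversary n B sig badX"
  shows "inj_on (phi B sig) (Omega n T)"
proof (rule inj_onI)
  fix \<omega> \<omega>' assume w: "\<omega> \<in> Omega n T" "\<omega>' \<in> Omega n T" and eq: "phi B sig \<omega> = phi B sig \<omega>'"
  have s: "sig \<omega> t \<in> {-1, 1}" for t using adm by (auto simp: admissible_adversary_def)
  have dep: "\<And>t. (\<forall>s<t. \<forall>i. \<omega> s i = \<omega>' s i) \<Longrightarrow> sig \<omega> t = sig \<omega>' t"
    using adm unfolding admissible_adversary_def by blast
  have "\<forall>i. \<omega> t i = \<omega>' t i" for t
  proof (induction t rule: less_induct)
    case (less t)
    hence sg: "sig \<omega> t = sig \<omega>' t" using dep by blast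
    show ?case
    proof
      fix i
      have "phi B sig \<omega> t i = phi B sig \<omega>' t i" using eq by simp
      thus "\<omega> t i = \<omega>' t i" using sg s[of t] unfolding phi_def
        by (cases "i \<in> B") auto
    qed
  qed
  thus "\<omega> = \<omega>'" by (auto simp: fun_eq_iff)
qed

lemma phi_bij:
  assumes adm: "admissible_adversary n B sig badX"
  shows "bij_betw (phi B sig) (Omega n T) (Omega n T)"
proof -
  have "phi B sig ` Omega n T \<subseteq> Omega n T" using phi_into[OF adm] by blast
  hence "phi B sig ` Omega n T = Omega n T" by (rule endo_inj_surj[OF Omega_finite _ phi_inj[OF adm]])
  thus ?thesis by (simp add: bij_betw_def phi_inj[OF adm])
qed

lemma measure_phi:
  assumes adm: "admissible_adversary n B sig badX"
  shows "measure (measure_pmf (pmf_of_set (Omega n T))) {\<omega>. Q (phi B sig \<omega>)}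
       = measure (measure_pmf (pmf_of_set (Omega n T))) {\<omega>. Q \<omega>}"
proof -
  let ?O = "Omega n T"
  have surj: "phi B sig ` ?O = ?O" and inj: "inj_on (phi B sig) ?O"
    using phi_bij[OF adm, of T] unfolding bij_betw_def by auto
  have "phi B sig ` (?O \<inter> {\<omega>. Q (phi B sig \<omega>)}) = ?O \<inter> {\<omega>. Q \<omega>}"
  proof
    show "phi B sig ` (?O \<inter> {\<omega>. Q (phi B sig \<omega>)}) \<subseteq> ?O \<inter> {\<omega>. Q \<omega>}"
      using phi_into[OF adm] by auto
    show "?O \<inter> {\<omega>. Q \<omega>} \<subseteq> phi B sig ` (?O \<inter> {\<omega>. Q (phi B sig \<omega>)})"
    proof
      fix y assume y: "y \<in> ?O \<inter> {\<omega>. Q \<omega>}"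
      then obtain x where x: "x \<in> ?O" "y = phi B sig x" using surj by (metis IntD1 imageE)
      thus "y \<in> phi B sig ` (?O \<inter> {\<omega>. Q (phi B sig \<omega>)})" using y by auto
    qed
  qed
  moreover have "inj_on (phi B sig) (?O \<inter> {\<omega>. Q (phi B sig \<omega>)})"
    using inj by (rule inj_on_subset) auto
  ultimately have "card (?O \<inter> {\<omega>. Q (phi B sig \<omega>)}) = card (?O \<inter> {\<omega>. Q \<omega>})"
    by (metis card_image)
  thus ?thesis by (simp add: measure_pmf_of_set[OF Omega_ne Omega_finite])
qed

lemma W_le:
  fixes G Bs \<sigma> :: int
  assumes "\<sigma> \<in> {-1, 1}" "sgnp (G + Bs) = \<sigma>"
  shows "(\<sigma> * G)^2 - sgnp (\<sigma> * G) * (\<sigma> * G)^2 \<le> 2 * Bs^2"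
proof -
  have sq: "G^2 \<le> Bs^2" if "\<bar>G\<bar> \<le> \<bar>Bs\<bar>" using that abs_le_square_iff by blast
  have p: "(\<sigma> * G)^2 = G^2" using assms(1) by (auto simp: power2_eq_square)
  show ?thesis
  proof (cases "\<sigma> = 1")
    case True
    hence gb: "G + Bs \<ge> 0" using assms(2) unfolding sgnp_def by (cases "G + Bs \<ge> 0") auto
    show ?thesis
    proof (cases "G \<ge> 0")
      case True thus ?thesis using \<open>\<sigma> = 1\<close> by (simp add: sgnp_def)
    next
      case False
      hence "\<bar>G\<bar> \<le> \<bar>Bs\<bar>" using gb by linarith
      hence "G^2 \<le> Bs^2" by (rule sq)
      thus ?thesis using False \<open>\<sigma> = 1\<close> by (simp add: sgnp_def)
    qed
  next
    case False
    hence s: "\<sigma> = -1" using assms(1) by auto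
    hence gb: "G + Bs < 0" using assms(2) unfolding sgnp_def by (cases "G + Bs \<ge> 0") auto
    show ?thesis
    proof (cases "G \<le> 0")
      case True thus ?thesis using s by (simp add: sgnp_def)
    next
      case False
      hence "\<bar>G\<bar> \<le> \<bar>Bs\<bar>" using gb by linarith
      hence "G^2 \<le> Bs^2" by (rule sq)
      thus ?thesis using False s by (simp add: sgnp_def)
    qed
  qed
qed



lemma det_main:
  fixes M :: int
  assumes adm: "admissible_adversary n B sig badX" and Bn: "B \<subseteq> {..<n}"
    and surv: "survives n T B sig badX \<omega>"
    and mx: "\<forall>k<n. \<forall>l<n. k \<noteq> l \<longrightarrow> ip T B badX \<omega> k l \<le> M"
  shows "(\<Sum>t<T. hW ({..<n} - B) (phi B sig \<omega> t)) \<le> 2 * (real (card B) * real T + real (card B) * (real (card B) - 1) * real_of_int M)"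
proof -
  define gd where "gd = {..<n} - B"
  define Gs where "Gs t = (\<Sum>i\<in>gd. \<omega> t i)" for t
  define Bs where "Bs t = (\<Sum>i\<in>B. badX \<omega> t i)" for t
  define f where "f = card B"
  have finB: "finite B" using Bn finite_subset by blast
  have s: "sig \<omega> t \<in> {-1, 1}" for t using adm by (auto simp: admissible_adversary_def)
  have bx: "badX \<omega> t i \<in> {-1, 1}" for t i using adm by (auto simp: admissible_adversary_def)
  have a: "(\<Sum>i\<in>gd. phi B sig \<omega> t i) = sig \<omega> t * Gs t" for t
    unfolding Gs_def gd_def phi_def by (simp add: sum_distrib_left)
  have b: "(\<Sum>i<n. play B badX \<omega> t i) = Gs t + Bs t" for t
  proof -
    have "(\<Sum>i<n. play B badX \<omega> t i) = (\<Sum>i\<in>gd. play B badX \<omega> t i) + (\<Sum>i\<in>B. play B badX \<omega> t i)"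
      unfolding gd_def by (rule sum.subset_diff[OF Bn]) simp
    thus ?thesis unfolding Gs_def Bs_def play_def gd_def by simp
  qed
  have c: "hW gd (phi B sig \<omega> t) \<le> 2 * real_of_int ((Bs t)^2)" if "t < T" for t
  proof -
    have "sgnp (Gs t + Bs t) = sig \<omega> t" using surv that b by (simp add: survives_def)
    from W_le[OF s this] have "(sig \<omega> t * Gs t)^2 - sgnp (sig \<omega> t * Gs t) * (sig \<omega> t * Gs t)^2 \<le> 2 * (Bs t)^2" .
    hence "real_of_int ((sig \<omega> t * Gs t)^2 - sgnp (sig \<omega> t * Gs t) * (sig \<omega> t * Gs t)^2) \<le> real_of_int (2 * (Bs t)^2)"
      by (simp only: of_int_le_iff)
    thus ?thesis unfolding hW_def a by simp
  qed
  have d: "(\<Sum>t<T. (Bs t)^2) = (\<Sum>k\<in>B. \<Sum>l\<in>B. ip T B badX \<omega> k l)"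
  proof -
    have "(\<Sum>t<T. (Bs t)^2) = (\<Sum>t<T. \<Sum>k\<in>B. \<Sum>l\<in>B. badX \<omega> t k * badX \<omega> t l)"
      unfolding Bs_def by (simp add: power2_eq_square sum_product)
    also have "\<dots> = (\<Sum>k\<in>B. \<Sum>t<T. \<Sum>l\<in>B. badX \<omega> t k * badX \<omega> t l)" by (rule sum.swap)
    also have "\<dots> = (\<Sum>k\<in>B. \<Sum>l\<in>B. \<Sum>t<T. badX \<omega> t k * badX \<omega> t l)" by (intro sum.cong refl sum.swap)
    also have "\<dots> = (\<Sum>k\<in>B. \<Sum>l\<in>B. ip T B badX \<omega> k l)"
      by (intro sum.cong refl) (auto simp: ip_def play_def)
    finally show ?thesis .
  qed
  have e: "(\<Sum>k\<in>B. \<Sum>l\<in>B. ip T B badX \<omega> k l) \<le> int f * int T + int f * (int f - 1) * M"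
  proof -
    have "(\<Sum>l\<in>B. ip T B badX \<omega> k l) \<le> int T + (int f - 1) * M" if k: "k \<in> B" for k
    proof -
      have kk: "ip T B badX \<omega> k k = int T"
      proof -
        have "ip T B badX \<omega> k k = (\<Sum>t<T. 1)"
          unfolding ip_def play_def using k bx by (intro sum.cong refl) (auto, (metis insert_iff singletonD mult_minus_left mult_1 minus_minus)+)
        thus ?thesis by simp
      qed
      have "(\<Sum>l\<in>B. ip T B badX \<omega> k l) = ip T B badX \<omega> k k + (\<Sum>l\<in>B - {k}. ip T B badX \<omega> k l)"
        using k finB by (simp add: sum.remove)
      also have "(\<Sum>l\<in>B - {k}. ip T B badX \<omega> k l) \<le> (\<Sum>l\<in>B - {k}. M)"
        using mx k Bn by (intro sum_mono) (metis DiffE insertCI lessThan_iff subsetD)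
      also have "\<dots> = (int f - 1) * M"
      proof -
        have c1: "card (B - {k}) = f - 1" using k finB by (simp add: f_def)
        have f1: "f \<ge> 1" using k finB unfolding f_def by (metis One_nat_def Suc_leI card_gt_0_iff empty_iff)
        have "(\<Sum>l\<in>B - {k}. M) = int (card (B - {k})) * M" by simp
        also have "int (card (B - {k})) = int f - 1" using c1 f1 by simp
        finally show ?thesis .
      qed
      finally show ?thesis using kk by simp
    qed
    hence "(\<Sum>k\<in>B. \<Sum>l\<in>B. ip T B badX \<omega> k l) \<le> (\<Sum>k\<in>B. int T + (int f - 1) * M)" by (rule sum_mono)
    also have "\<dots> = int f * int T + int f * (int f - 1) * M" by (simp add: f_def algebra_simps)
    finally show ?thesis .
  qed
  have "(\<Sum>t<T. hW gd (phi B sig \<omega> t)) \<le> (\<Sum>t<T. 2 * real_of_int ((Bs t)^2))"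
    by (intro sum_mono c) auto
  also have "\<dots> = 2 * real_of_int (\<Sum>t<T. (Bs t)^2)" by (simp add: sum_distrib_left)
  also have "\<dots> \<le> 2 * real_of_int (int f * int T + int f * (int f - 1) * M)"
  proof -
    have "real_of_int (\<Sum>t<T. (Bs t)^2) \<le> real_of_int (int f * int T + int f * (int f - 1) * M)"
      using d e by (simp only: of_int_le_iff)
    thus ?thesis by (intro mult_left_mono) auto
  qed
  finally show ?thesis by (simp add: gd_def f_def)
qed



lemma prob_A1:
  assumes adm: "admissible_adversary n B sig badX" and Bn: "B \<subseteq> {..<n}"
    and T: "T > 0" and g: "card ({..<n} - B) > 0"
    and x: "x \<ge> 0" and thr: "thr = real T * real (card ({..<n} - B)) - x"
  shows "measure (measure_pmf (pmf_of_set (Omega n T)))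
           {\<omega>. (\<Sum>t<T. hW ({..<n} - B) (phi B sig \<omega> t)) \<le> thr}
         \<le> exp (-2 * x\<^sup>2 / (real T * (2 * real (card ({..<n} - B))^2)\<^sup>2))"
proof -
  let ?gd = "{..<n} - B"
  have "measure (measure_pmf (pmf_of_set (Omega n T))) {\<omega>. (\<Sum>t<T. hW ?gd (phi B sig \<omega> t)) \<le> thr}
      = measure (measure_pmf (pmf_of_set (Omega n T))) {\<omega>. (\<Sum>t<T. hW ?gd (\<omega> t)) \<le> thr}"
    using measure_phi[OF adm, where Q="\<lambda>\<omega>. (\<Sum>t<T. hW ?gd (\<omega> t)) \<le> thr" and T=T] by simp
  also have "\<dots> = measure (measure_pmf (Pi_pmf {..<T} (\<lambda>_. 0) (\<lambda>_. pmf_of_set (Vs n))))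
     {\<omega>. (\<Sum>t<T. hW ?gd (\<omega> t)) \<le> real T * measure_pmf.expectation (pmf_of_set (Vs n)) (hW ?gd) - x}"
    by (simp add: Omega_pmf exp_hW thr)
  also have "\<dots> \<le> exp (-2 * x\<^sup>2 / (real T * (2 * real (card ?gd)^2 - 0)\<^sup>2))"
  proof (rule hoeffding_gen(1)[OF T _ _ x])
    show "0 < 2 * real (card ?gd)^2" using g by (intro mult_pos_pos zero_less_power) auto
    fix v assume "v \<in> set_pmf (pmf_of_set (Vs n))"
    hence "v \<in> Vs n" using Vs_finite Vs_ne by simp
    thus "hW ?gd v \<in> {0..2 * real (card ?gd)^2}" by (intro hW_range) auto
  qed
  finally show ?thesis by simp
qed

lemma prob_A2:
  assumes T: "T > 0" and ij: "i < n" "j < n" "i \<noteq> j" and x: "x \<ge> 0"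
  shows "measure (measure_pmf (pmf_of_set (Omega n T)))
           {\<omega>. x \<le> (\<Sum>t<T. real_of_int (\<omega> t i * \<omega> t j))}
         \<le> exp (-2 * x\<^sup>2 / (real T * 4))"
proof -
  have "measure (measure_pmf (pmf_of_set (Omega n T))) {\<omega>. x \<le> (\<Sum>t<T. real_of_int (\<omega> t i * \<omega> t j))}
     = measure (measure_pmf (Pi_pmf {..<T} (\<lambda>_. 0) (\<lambda>_. pmf_of_set (Vs n))))
     {\<omega>. (\<Sum>t<T. (\<lambda>v. real_of_int (v i * v j)) (\<omega> t)) \<ge> real T * measure_pmf.expectation (pmf_of_set (Vs n)) (\<lambda>v. real_of_int (v i * v j)) + x}"
    by (simp only: Omega_pmf exp_pair[OF ij]) simp
  also have "\<dots> \<le> exp (-2 * x\<^sup>2 / (real T * (1 - (-1))\<^sup>2))"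
  proof (rule hoeffding_gen(2)[OF T _ _ x])
    fix v assume "v \<in> set_pmf (pmf_of_set (Vs n))"
    hence v: "v \<in> Vs n" using Vs_finite Vs_ne by simp
    have "v i \<in> {-1, 1}" "v j \<in> {-1, 1}" using v ij by (auto simp: Vs_def PiE_dflt_def)
    thus "real_of_int (v i * v j) \<in> {-1..1}" by auto
  qed simp
  finally show ?thesis by simp
qed




lemma final_arith:
  fixes n :: nat and c e p :: real
  assumes n2: "n \<ge> 2" and e: "e = real n powr (-(c+3))" and p: "p \<le> real n ^ 2"
  shows "e + p * e \<le> real n powr (-c)"
proof -
  have npos: "real n > 0" using n2 by simp
  have e0: "e \<ge> 0" using e by simp
  have "e = real n powr (-c) * real n powr (-3)" unfolding e by (simp add: powr_add[symmetric])
  also have "real n powr (-3) = 1 / real n ^ 3"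
    using npos by (simp add: powr_minus powr_realpow divide_inverse)
  finally have e': "e = real n powr (-c) / real n ^ 3" by simp
  have "e + p * e \<le> e + real n ^ 2 * e" using p e0 by (simp add: mult_right_mono)
  also have "\<dots> = (1 + real n ^ 2) * e" by (simp add: algebra_simps)
  also have "\<dots> = real n powr (-c) * ((1 + real n ^ 2) / real n ^ 3)" using e' by simp
  also have "\<dots> \<le> real n powr (-c) * 1"
  proof (intro mult_left_mono)
    have "1 + real n ^ 2 \<le> real n ^ 3"
    proof -
      have "real n \<ge> 2" using n2 by simp
      hence "real n ^ 3 = real n * real n ^ 2" by (simp add: power3_eq_cube power2_eq_square)
      also have "\<dots> \<ge> 2 * real n ^ 2" using \<open>real n \<ge> 2\<close> by (intro mult_right_mono) auto
      finally show ?thesis using \<open>real n \<ge> 2\<close> by (smt (verit) one_le_power)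
    qed
    thus "(1 + real n ^ 2) / real n ^ 3 \<le> 1" using npos by simp
  qed simp
  finally show ?thesis by simp
qed

lemma main_bound:
  fixes c \<epsilon> :: real and n T :: nat
  assumes c: "c > 0" and n2: "n \<ge> 2" and Bn: "B \<subseteq> {..<n}" and eps: "0 < \<epsilon>" "\<epsilon> \<le> 1"
    and fB: "real (card B) = real n / (3 + \<epsilon>)" and adm: "admissible_adversary n B sig badX"
    and TT: "real T \<ge> 128 * (c + 3) * (real n / \<epsilon>)^2 * ln (real n)"
  shows "measure (measure_pmf (pmf_of_set (Omega n T)))
        {\<omega>. survives n T B sig badX \<omega> \<and>
             (\<exists>i\<in>{..<n} - B. \<exists>j\<in>{..<n} - B. i \<noteq> j \<and>
                (\<forall>k<n. \<forall>l<n. k \<noteq> l \<longrightarrow> ip T B badX \<omega> k l \<le> ip T B badX \<omega> i j))}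
      \<le> real n powr (- c)"
proof -
  define gd where "gd = {..<n} - B"
  define f where "f = real (card B)"
  define g where "g = real (card gd)"
  define L where "L = (c + 3) * ln (real n)"
  define D3 where "D3 = sqrt (2 * real T * L)"
  define thr where "thr = 2 * (f * real T + f * (f - 1) * D3)"
  define x where "x = real T * g - thr"
  define Pm where "Pm = measure_pmf (pmf_of_set (Omega n T))"
  define e where "e = real n powr (-(c+3))"
  have npos: "real n > 0" using n2 by simp
  have lnpos: "ln (real n) > 0" using n2 by simp
  have Lpos: "L > 0" unfolding L_def using c lnpos by simp
  have Tpos': "real T > 0"
  proof -
    have "128 * (c + 3) * (real n / \<epsilon>)^2 * ln (real n) > 0" using c eps npos lnpos by simp
    thus ?thesis using TT by linarith
  qed
  hence Tpos: "T > 0" by simp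
  have D3nn: "D3 \<ge> 0" unfolding D3_def using Tpos' Lpos by simp
  have finB: "finite B" using Bn finite_subset by blast
  have cB: "card B \<le> n" using card_mono[OF _ Bn] by simp
  have g_eq: "g = real n - f"
    unfolding g_def f_def gd_def using Bn finB cB by (simp add: card_Diff_subset of_nat_diff)
  have f_le: "f \<le> real n / 3"
  proof -
    have "real n / (3 + \<epsilon>) \<le> real n / 3" using eps npos by (intro divide_left_mono) auto
    thus ?thesis using fB unfolding f_def by simp
  qed
  have f0: "f \<ge> 0" unfolding f_def by simp
  have gpos: "card gd > 0"
  proof -
    have "f < real n" using f_le npos by linarith
    hence "g > 0" using g_eq by simp
    thus ?thesis unfolding g_def by simp
  qed
  have n3f: "real n - 3 * f \<ge> real n * \<epsilon> / 4"
  proof -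
    have "real n - 3 * f = real n * \<epsilon> / (3 + \<epsilon>)" using fB eps unfolding f_def by (simp add: field_simps)
    also have "\<dots> \<ge> real n * \<epsilon> / 4" using eps npos by (intro divide_left_mono) auto
    finally show ?thesis .
  qed
  have D3le: "D3 \<le> \<epsilon> * real T / (8 * real n)"
  proof -
    have "128 * (c + 3) * (real n / \<epsilon>)^2 * ln (real n) = 128 * real n ^ 2 * L / \<epsilon>^2"
      unfolding L_def by (simp add: field_simps power2_eq_square)
    hence "128 * real n ^ 2 * L / \<epsilon>^2 \<le> real T" using TT by simp
    hence h1: "128 * real n ^ 2 * L \<le> \<epsilon>^2 * real T" using eps by (simp add: field_simps)
    have "2 * real T * L \<le> (\<epsilon> * real T / (8 * real n))^2"
    proof -
      have "2 * real T * L * (64 * real n ^ 2) = real T * (128 * real n ^ 2 * L)" by simp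
      also have "\<dots> \<le> real T * (\<epsilon>^2 * real T)" using h1 Tpos' by (intro mult_left_mono) auto
      finally have "2 * real T * L * (64 * real n ^ 2) \<le> real T * (\<epsilon>^2 * real T)" .
      thus ?thesis using npos by (simp add: field_simps power2_eq_square)
    qed
    hence "D3 \<le> sqrt ((\<epsilon> * real T / (8 * real n))^2)" unfolding D3_def by (rule real_sqrt_le_mono)
    also have "\<dots> = \<epsilon> * real T / (8 * real n)" using eps Tpos' npos by simp
    finally show ?thesis .
  qed
  have xge: "x \<ge> g^2 * D3"
  proof -
    have a1: "f * (f - 1) * D3 \<le> f^2 * D3" using f0 D3nn by (intro mult_right_mono) (auto simp: power2_eq_square mult_left_mono)
    have "x \<ge> real T * (real n - 3 * f) - 2 * f^2 * D3"
      unfolding x_def thr_def g_eq using a1 by (simp add: algebra_simps)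
    moreover have "real T * (real n - 3 * f) \<ge> real T * (real n * \<epsilon> / 4)"
      using n3f Tpos' by (intro mult_left_mono) auto
    moreover have "real T * (real n * \<epsilon> / 4) = 2 * real n ^ 2 * (\<epsilon> * real T / (8 * real n))"
      using npos by (simp add: field_simps power2_eq_square)
    moreover have "2 * real n ^ 2 * (\<epsilon> * real T / (8 * real n)) \<ge> 2 * real n ^ 2 * D3"
      using D3le by (intro mult_left_mono) auto
    moreover have "g^2 + 2 * f^2 \<le> 2 * real n ^ 2"
    proof -
      have "g \<le> real n" "g \<ge> 0" using g_eq f0 unfolding g_def by auto
      hence "g^2 \<le> real n ^ 2" by (intro power_mono) auto
      moreover have "f^2 \<le> (real n / 3)^2" using f_le f0 by (intro power_mono) auto
      ultimately show ?thesis by (simp add: power_divide) (smt (verit) zero_le_power2)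
    qed
    hence "(g^2 + 2 * f^2) * D3 \<le> 2 * real n ^ 2 * D3" using D3nn by (intro mult_right_mono) auto
    ultimately show ?thesis by (simp add: algebra_simps)
  qed
  have x0: "x \<ge> 0"
  proof -
    have "0 \<le> g^2 * D3" using D3nn by simp
    thus ?thesis using xge by linarith
  qed
  have eL: "exp (- L) = e" unfolding e_def L_def using npos by (simp add: powr_def algebra_simps)
  have gpos': "g > 0" using gpos unfolding g_def by simp
  have b1: "exp (-2 * x\<^sup>2 / (real T * (2 * g^2)\<^sup>2)) \<le> e"
  proof -
    have "x^2 \<ge> (g^2 * D3)^2" using xge D3nn gpos' by (intro power_mono) auto
    also have "(g^2 * D3)^2 = g^4 * (2 * real T * L)" unfolding D3_def using Tpos' Lpos
      by (simp add: power_mult_distrib power2_eq_square[of "g"] power4_eq_xxxx)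
    finally have "x^2 \<ge> g^4 * (2 * real T * L)" .
    hence "L \<le> 2 * x\<^sup>2 / (real T * (2 * g^2)\<^sup>2)"
      using Tpos' gpos' by (simp add: field_simps power2_eq_square power4_eq_xxxx)
    hence "exp (-2 * x\<^sup>2 / (real T * (2 * g^2)\<^sup>2)) \<le> exp (- L)" by simp
    thus ?thesis using eL by simp
  qed
  have b2: "exp (-2 * D3\<^sup>2 / (real T * 4)) = e"
  proof -
    have "D3^2 = 2 * real T * L" unfolding D3_def using Tpos' Lpos by simp
    hence "-2 * D3\<^sup>2 / (real T * 4) = - L" using Tpos' by simp
    thus ?thesis using eL by simp
  qed
  define A1 where "A1 = {\<omega>. (\<Sum>t<T. hW gd (phi B sig \<omega> t)) \<le> thr}"
  define P where "P = {p \<in> gd \<times> gd. fst p \<noteq> snd p}"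
  define A2 where "A2 p = {\<omega> :: nat \<Rightarrow> nat \<Rightarrow> int. D3 \<le> (\<Sum>t<T. real_of_int (\<omega> t (fst p) * \<omega> t (snd p)))}" for p :: "nat \<times> nat"
  let ?E = "{\<omega>. survives n T B sig badX \<omega> \<and>
             (\<exists>i\<in>{..<n} - B. \<exists>j\<in>{..<n} - B. i \<noteq> j \<and>
                (\<forall>k<n. \<forall>l<n. k \<noteq> l \<longrightarrow> ip T B badX \<omega> k l \<le> ip T B badX \<omega> i j))}"
  have incl: "?E \<subseteq> A1 \<union> (\<Union>p\<in>P. A2 p)"
  proof
    fix \<omega> assume "\<omega> \<in> ?E"
    then obtain i j where surv: "survives n T B sig badX \<omega>" and ij: "i \<in> gd" "j \<in> gd" "i \<noteq> j"
      and mx: "\<forall>k<n. \<forall>l<n. k \<noteq> l \<longrightarrow> ip T B badX \<omega> k l \<le> ip T B badX \<omega> i j"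
      unfolding gd_def by blast
    define M where "M = ip T B badX \<omega> i j"
    have Mr: "real_of_int M = (\<Sum>t<T. real_of_int (\<omega> t i * \<omega> t j))"
      using ij unfolding M_def ip_def play_def gd_def by simp
    show "\<omega> \<in> A1 \<union> (\<Union>p\<in>P. A2 p)"
    proof (cases "D3 \<le> real_of_int M")
      case True
      hence "\<omega> \<in> A2 (i, j)" unfolding A2_def using Mr by simp
      moreover have "(i, j) \<in> P" using ij unfolding P_def by simp
      ultimately show ?thesis by blast
    next
      case False
      have "(\<Sum>t<T. hW gd (phi B sig \<omega> t)) \<le> 2 * (f * real T + f * (f - 1) * real_of_int M)"
        using det_main[OF adm Bn surv, of M] mx unfolding M_def gd_def f_def by simp
      also have "\<dots> \<le> thr"
      proof -
        have "f * (f - 1) \<ge> 0"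
        proof (cases "f \<ge> 1")
          case True thus ?thesis using f0 by simp
        next
          case False
          hence "card B = 0" unfolding f_def by simp
          thus ?thesis unfolding f_def by simp
        qed
        hence "f * (f - 1) * real_of_int M \<le> f * (f - 1) * D3" using False by (intro mult_left_mono) auto
        thus ?thesis unfolding thr_def by simp
      qed
      finally show ?thesis unfolding A1_def by simp
    qed
  qed
  have finP: "finite P" unfolding P_def gd_def by simp
  have cardP: "real (card P) \<le> real n ^ 2"
  proof -
    have "P \<subseteq> {..<n} \<times> {..<n}" unfolding P_def gd_def by auto
    hence "card P \<le> card ({..<n} \<times> {..<n})" by (intro card_mono) auto
    hence "card P \<le> n ^ 2" by (simp add: card_cartesian_product power2_eq_square)
    thus ?thesis by (metis of_nat_le_iff of_nat_power)
  qed
  have "measure Pm ?E \<le> measure Pm (A1 \<union> (\<Union>p\<in>P. A2 p))"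
    using incl unfolding Pm_def by (intro measure_pmf.finite_measure_mono) auto
  also have "\<dots> \<le> measure Pm A1 + measure Pm (\<Union>p\<in>P. A2 p)"
    unfolding Pm_def by (intro measure_Un_le) auto
  also have "measure Pm (\<Union>p\<in>P. A2 p) \<le> (\<Sum>p\<in>P. measure Pm (A2 p))"
    unfolding Pm_def by (intro measure_pmf.finite_measure_subadditive_finite finP) auto
  also have "(\<Sum>p\<in>P. measure Pm (A2 p)) \<le> (\<Sum>p\<in>P. e)"
  proof (intro sum_mono)
    fix p assume p: "p \<in> P"
    hence "fst p < n" "snd p < n" "fst p \<noteq> snd p" unfolding P_def gd_def by auto
    from prob_A2[OF Tpos this D3nn] show "measure Pm (A2 p) \<le> e"
      unfolding Pm_def A2_def using b2 by simp
  qed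
  also have "measure Pm A1 \<le> e"
  proof -
    have "measure Pm A1 \<le> exp (-2 * x\<^sup>2 / (real T * (2 * g^2)\<^sup>2))"
      unfolding Pm_def A1_def g_def gd_def
      by (rule prob_A1[OF adm Bn Tpos _ x0]) (use gpos in \<open>simp_all add: gd_def x_def g_def\<close>)
    thus ?thesis using b1 by simp
  qed
  finally have "measure Pm ?E \<le> e + real (card P) * e" by simp
  also have "\<dots> \<le> real n powr (-c)" by (rule final_arith[OF n2 e_def cardP])
  finally show ?thesis unfolding Pm_def .
qed


theorem lemma2:
  "\<forall>c>0. \<exists>\<epsilon>0>0. \<exists>C>0. \<exists>K::nat. \<exists>N::nat. \<forall>n\<ge>N. \<forall>(B::nat set) (\<epsilon>::real) sig badX.
     B \<subseteq> {..<n} \<and> 0 < \<epsilon> \<and> \<epsilon> \<le> \<epsilon>0 \<and> real (card B) = real n / (3 + \<epsilon>) \<and>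
     admissible_adversary n B sig badX \<longrightarrow>
     (let T = nat \<lceil>C * (real n / \<epsilon>)^2 * (ln (real n))^K\<rceil> in
      measure (measure_pmf (pmf_of_set (Omega n T)))
        {\<omega>. survives n T B sig badX \<omega> \<and>
             (\<exists>i\<in>{..<n} - B. \<exists>j\<in>{..<n} - B. i \<noteq> j \<and>
                (\<forall>k<n. \<forall>l<n. k \<noteq> l \<longrightarrow> ip T B badX \<omega> k l \<le> ip T B badX \<omega> i j))}
      \<le> real n powr (- c))"
proof (intro allI impI)
  fix c :: real assume c: "c > 0"
  have key: "\<forall>n\<ge>2. \<forall>(B::nat set) (\<epsilon>::real) sig badX.
     B \<subseteq> {..<n} \<and> 0 < \<epsilon> \<and> \<epsilon> \<le> 1 \<and> real (card B) = real n / (3 + \<epsilon>) \<and>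
     admissible_adversary n B sig badX \<longrightarrow>
     (let T = nat \<lceil>(128 * (c + 3)) * (real n / \<epsilon>)^2 * (ln (real n))^1\<rceil> in
      measure (measure_pmf (pmf_of_set (Omega n T)))
        {\<omega>. survives n T B sig badX \<omega> \<and>
             (\<exists>i\<in>{..<n} - B. \<exists>j\<in>{..<n} - B. i \<noteq> j \<and>
                (\<forall>k<n. \<forall>l<n. k \<noteq> l \<longrightarrow> ip T B badX \<omega> k l \<le> ip T B badX \<omega> i j))}
      \<le> real n powr (- c))"
  proof (intro allI impI)
    fix n :: nat and B :: "nat set" and \<epsilon> :: real and sig badX
    assume n2: "n \<ge> 2" and H: "B \<subseteq> {..<n} \<and> 0 < \<epsilon> \<and> \<epsilon> \<le> 1 \<and> real (card B) = real n / (3 + \<epsilon>) \<and>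
     admissible_adversary n B sig badX"
    define T where "T = nat \<lceil>(128 * (c + 3)) * (real n / \<epsilon>)^2 * (ln (real n))^1\<rceil>"
    have TT: "real T \<ge> 128 * (c + 3) * (real n / \<epsilon>)^2 * ln (real n)"
      unfolding T_def using real_nat_ceiling_ge by simp
    have "measure (measure_pmf (pmf_of_set (Omega n T)))
        {\<omega>. survives n T B sig badX \<omega> \<and>
             (\<exists>i\<in>{..<n} - B. \<exists>j\<in>{..<n} - B. i \<noteq> j \<and>
                (\<forall>k<n. \<forall>l<n. k \<noteq> l \<longrightarrow> ip T B badX \<omega> k l \<le> ip T B badX \<omega> i j))}
      \<le> real n powr (- c)"
      using H by (intro main_bound[OF c n2 _ _ _ _ _ TT]) auto
    thus "(let T = nat \<lceil>(128 * (c + 3)) * (real n / \<epsilon>)^2 * (ln (real n))^1\<rceil> in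
      measure (measure_pmf (pmf_of_set (Omega n T)))
        {\<omega>. survives n T B sig badX \<omega> \<and>
             (\<exists>i\<in>{..<n} - B. \<exists>j\<in>{..<n} - B. i \<noteq> j \<and>
                (\<forall>k<n. \<forall>l<n. k \<noteq> l \<longrightarrow> ip T B badX \<omega> k l \<le> ip T B badX \<omega> i j))}
      \<le> real n powr (- c))" unfolding T_def Let_def .
  qed
  have pos: "(128 * (c + 3) :: real) > 0" using c by simp
  show "\<exists>\<epsilon>0>0. \<exists>C>0. \<exists>K::nat. \<exists>N::nat. \<forall>n\<ge>N. \<forall>(B::nat set) (\<epsilon>::real) sig badX.
     B \<subseteq> {..<n} \<and> 0 < \<epsilon> \<and> \<epsilon> \<le> \<epsilon>0 \<and> real (card B) = real n / (3 + \<epsilon>) \<and>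
     admissible_adversary n B sig badX \<longrightarrow>
     (let T = nat \<lceil>C * (real n / \<epsilon>)^2 * (ln (real n))^K\<rceil> in
      measure (measure_pmf (pmf_of_set (Omega n T)))
        {\<omega>. survives n T B sig badX \<omega> \<and>
             (\<exists>i\<in>{..<n} - B. \<exists>j\<in>{..<n} - B. i \<noteq> j \<and>
                (\<forall>k<n. \<forall>l<n. k \<noteq> l \<longrightarrow> ip T B badX \<omega> k l \<le> ip T B badX \<omega> i j))}
      \<le> real n powr (- c))"
    apply (rule exI[of _ 1], rule conjI, simp)
    apply (rule exI[of _ "128 * (c + 3)"], rule conjI, rule pos)
    apply (rule exI[of _ 1], rule exI[of _ 2])
    by (rule key)
qed

end
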